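(* Let $1<p<\infty$, $R>0$, $\alpha\in\mathbb{R}\setminus\{0\}$, and let $w$ be a positive smooth function on $[0,R]$ with $w(0)=1$. Let $\bar\lambda_p([0,R],w,\alpha)$ be the first eigenvalue of $$(p-1)|\varphi'|^{p-2}\varphi''+\frac{w'}{w}|\varphi'|^{p-2}\varphi'=-\lambda|\varphi|^{p-2}\varphi,\quad |\varphi'(0)|^{p-2}\varphi'(0)=\alpha|\varphi(0)|^{p-2}\varphi(0),\quad \varphi'(R)=0,$$ and let $u>0$ be a positive first eigenfunction. Then: (1) if $\alpha>0$, then $u'>0$ on $[0,R)$; (2) if $\alpha<0$, then $u'<0$ on $[0,R)$; (3) if $\alpha>0$ and $0<\bar R<R$, then $\bar\lambda_p([0,R],w,\alpha)<\bar\lambda_p([0,\bar R],w,\alpha)$ (where $w$ is restricted to $[0,\bar R]$). Assume in addition that $w$ is strictly log-concave, i.e. $(\log w)''<0$ on $[0,R)$. Then: (4) if $\alpha>0$, then $u'/u$ is monotone decreasing on $[0,R]$, and in particular $|u'/u|^{p-1}\le\alpha$ on $[0,R]$; (5) if $\alpha<0$, then $u'/u$ is monotone increasing on $[0,R]$, and in particular $|u'/u|^{p-1}\le-\alpha$ on $[0,R]$.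
   Context: The first eigenvalue is characterized by $\bar\lambda_p([0,R],w,\alpha)=\inf\{\int_0^R|u'|^pw\,dt+\alpha|u(0)|^p: u\in W^{1,p}([0,R],w\,dt),\ \int_0^R|u|^pw\,dt=1\}$; its eigenfunctions do not change sign. *)

theory Defs
  imports "HOL-Analysis.Analysis"
begin

text \<open>Signed power  |x|^(q-2) x = sgn x * |x|^(q-1).\<close>
definition spow :: "real \<Rightarrow> real \<Rightarrow> real" where
  "spow q x = sgn x * \<bar>x\<bar> powr (q - 1)"

definition smooth_on_interval :: "real \<Rightarrow> (real \<Rightarrow> real) \<Rightarrow> bool" where
  "smooth_on_interval R w \<longleftrightarrow>
     (\<forall>n. \<forall>t\<in>{0..R}. ((deriv ^^ n) w has_real_derivative (deriv ^^ Suc n) w t) (at t))"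

text \<open>Sobolev space W^{1,p}([0,R]) (one-dimensional, via the absolutely continuous
  representative): u has weak derivative g in L^p([0,R]).  Since w is positive and
  continuous on [0,R], W^{1,p}([0,R], w dt) coincides with W^{1,p}([0,R]).\<close>
definition W1p_pair :: "real \<Rightarrow> real \<Rightarrow> (real \<Rightarrow> real) \<Rightarrow> (real \<Rightarrow> real) \<Rightarrow> bool" where
  "W1p_pair p R u g \<longleftrightarrow>
     set_integrable lborel {0..R} g \<and>
     set_integrable lborel {0..R} (\<lambda>t. \<bar>g t\<bar> powr p) \<and>
     set_integrable lborel {0..R} (\<lambda>t. \<bar>u t\<bar> powr p) \<and>
     (\<forall>x\<in>{0..R}. u x = u 0 + (LBINT t:{0..x}. g t))"

definition lam_bar :: "real \<Rightarrow> real \<Rightarrow> (real \<Rightarrow> real) \<Rightarrow> real \<Rightarrow> real" where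
  "lam_bar p R w \<alpha> = Inf {(LBINT t:{0..R}. \<bar>g t\<bar> powr p * w t) + \<alpha> * \<bar>u 0\<bar> powr p
      | u g. W1p_pair p R u g \<and> (LBINT t:{0..R}. \<bar>u t\<bar> powr p * w t) = 1}"

text \<open>u (with derivative du) is an eigenfunction for eigenvalue lam of
  (p-1)|u'|^{p-2}u'' + (w'/w)|u'|^{p-2}u' = -lam |u|^{p-2}u on [0,R],
  |u'(0)|^{p-2}u'(0) = alpha |u(0)|^{p-2}u(0), u'(R) = 0.
  The term (p-1)|u'|^{p-2}u'' is read as (|u'|^{p-2}u')'.\<close>
definition is_eigenfunction ::
  "real \<Rightarrow> real \<Rightarrow> (real \<Rightarrow> real) \<Rightarrow> real \<Rightarrow> real \<Rightarrow> (real \<Rightarrow> real) \<Rightarrow> (real \<Rightarrow> real) \<Rightarrow> bool" where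
  "is_eigenfunction p R w \<alpha> lam u du \<longleftrightarrow>
     (\<forall>t\<in>{0..R}. (u has_real_derivative du t) (at t within {0..R})) \<and>
     continuous_on {0..R} du \<and>
     (\<forall>t\<in>{0..R}. ((\<lambda>s. spow p (du s)) has_real_derivative
          (- lam * spow p (u t) - deriv w t / w t * spow p (du t))) (at t within {0..R})) \<and>
     spow p (du 0) = \<alpha> * spow p (u 0) \<and>
     du R = 0"

end

theory Submission
  imports Defs "HOL-Analysis.Analysis"
begin

lemma no_pos_slope:
  fixes z G :: "real \<Rightarrow> real"
  assumes ab: "a < b" and cz: "continuous_on {a..b} z"
    and der: "\<And>t. a < t \<Longrightarrow> t < b \<Longrightarrow> (z has_real_derivative G t) (at t)"
    and zb: "\<And>t. a < t \<Longrightarrow> t < b \<Longrightarrow> z b < z t"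
    and crit: "\<And>t. a < t \<Longrightarrow> t < b \<Longrightarrow> G t = 0 \<Longrightarrow> \<exists>d>0. \<forall>h>0. h < d \<longrightarrow> G (t - h) < 0"
    and t0: "a < t0" "t0 < b"
  shows "G t0 \<le> 0"
proof (rule ccontr)
  assume "\<not> G t0 \<le> 0"
  hence Gp: "G t0 > 0" by simp
  obtain d1 where d1: "d1 > 0" "\<forall>h>0. h < d1 \<longrightarrow> z t0 < z (t0 + h)"
    using DERIV_pos_inc_right[OF der[OF t0] Gp] by blast
  define h1 where "h1 = min d1 (b - t0) / 2"
  have h1: "h1 > 0" "h1 < d1" "t0 + h1 < b" using d1(1) t0 unfolding h1_def by (auto simp: min_def field_simps)
  have zh1: "z t0 < z (t0 + h1)" using d1 h1 by auto
  have czt: "continuous_on {t0..b} z" using cz by (rule continuous_on_subset) (use t0 in auto)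
  obtain s where s: "s \<in> {t0..b}" "\<forall>y\<in>{t0..b}. z y \<le> z s"
    using continuous_attains_sup[OF compact_Icc _ czt] t0 by fastforce
  have "z (t0 + h1) \<le> z s" using s h1 by auto
  hence "s \<noteq> t0" using zh1 by auto
  have "z b < z t0" using zb t0 by auto
  moreover have "z t0 \<le> z s" using s t0 by auto
  ultimately have "s \<noteq> b" by auto
  have st: "t0 < s" "s < b" using s \<open>s \<noteq> t0\<close> \<open>s \<noteq> b\<close> by auto
  have as: "a < s" using st t0 by auto
  have "G s = 0"
  proof (rule DERIV_local_max[OF der[OF as st(2)]])
    show "0 < min (s - t0) (b - s)" using st by auto
    show "\<forall>y. \<bar>s - y\<bar> < min (s - t0) (b - s) \<longrightarrow> z y \<le> z s"
    proof (intro allI impI)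
      fix y assume "\<bar>s - y\<bar> < min (s - t0) (b - s)"
      hence "y \<in> {t0..b}" by (auto simp: abs_if split: if_splits)
      thus "z y \<le> z s" using s(2) by blast
    qed
  qed
  then obtain d2 where d2: "d2 > 0" "\<forall>h>0. h < d2 \<longrightarrow> G (s - h) < 0"
    using crit[OF as st(2)] by blast
  define h2 where "h2 = min d2 (s - t0) / 2"
  have h2: "h2 > 0" "h2 < d2" "t0 < s - h2" using d2(1) st unfolding h2_def by (auto simp: min_def field_simps)
  obtain l \<xi> where xi: "s - h2 < \<xi>" "\<xi> < s" "DERIV z \<xi> :> l" "z s - z (s - h2) = (s - (s - h2)) * l"
  proof -
    have "\<exists>l \<xi>. s - h2 < \<xi> \<and> \<xi> < s \<and> DERIV z \<xi> :> l \<and> z s - z (s - h2) = (s - (s - h2)) * l"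
    proof (rule MVT)
      show "s - h2 < s" using h2 by auto
      show "continuous_on {s - h2..s} z" using cz by (rule continuous_on_subset) (use h2 t0 st in auto)
      show "z differentiable at x" if "s - h2 < x" "x < s" for x
        using der[of x] that h2 t0 st real_differentiable_def by fastforce
    qed
    thus ?thesis using that by blast
  qed
  have "a < \<xi>" "\<xi> < b" using xi h2 t0 st by auto
  hence "l = G \<xi>" using DERIV_unique[OF xi(3) der] by auto
  moreover have "G \<xi> < 0" using d2(2)[rule_format, of "s - \<xi>"] xi h2 by auto
  ultimately have "h2 * l < 0" using h2 by (simp add: mult_pos_neg)
  hence "z s < z (s - h2)" using xi(4) by simp
  moreover have "s - h2 \<in> {t0..b}" using h2 st by auto
  ultimately show False using s(2) by fastforce
qed

lemma abs_powr_der: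
  fixes q x :: real
  assumes "x \<noteq> 0"
  shows "((\<lambda>y. \<bar>y\<bar> powr q) has_real_derivative q * sgn x * \<bar>x\<bar> powr (q - 1)) (at x)"
proof (cases "x > 0")
  case True
  have "((\<lambda>y. y powr q) has_real_derivative q * sgn x * \<bar>x\<bar> powr (q - 1)) (at x)"
    using has_real_derivative_powr[OF True] True by simp
  then show ?thesis
    by (rule has_field_derivative_transform_within_open[where S="{0<..}"]) (use True in auto)
next
  case False
  hence xn: "x < 0" using assms by auto
  have "((\<lambda>y. y powr q) has_real_derivative q * (-x) powr (q - 1)) (at (-x))"
    by (rule has_real_derivative_powr) (use xn in auto)
  from DERIV_chain2[OF this DERIV_minus[OF DERIV_ident]]
  have "((\<lambda>y. (-y) powr q) has_real_derivative q * sgn x * \<bar>x\<bar> powr (q - 1)) (at x)"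
    using xn by simp
  then show ?thesis
    by (rule has_field_derivative_transform_within_open[where S="{..<0}"])
       (use xn in auto)
qed

lemma spow_zero[simp]: "spow p 0 = 0" by (simp add: spow_def)
lemma spow_pos: "0 < x \<Longrightarrow> spow p x = x powr (p-1)" by (simp add: spow_def)
lemma spow_neg: "x < 0 \<Longrightarrow> spow p x = - ((-x) powr (p-1))" by (simp add: spow_def)
lemma spow_gt0_iff: "spow p x > 0 \<longleftrightarrow> x > 0"
  by (cases "x > 0"; cases "x = 0") (auto simp: spow_def sgn_if)
lemma spow_lt0_iff: "spow p x < 0 \<longleftrightarrow> x < 0"
  by (cases "x < 0"; cases "x = 0") (auto simp: spow_def sgn_if)

locale eig =
  fixes p R \<alpha> :: real and w u du :: "real \<Rightarrow> real"
  assumes p1: "1 < p" and R0: "0 < R" and a0: "\<alpha> \<noteq> 0"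
    and sm: "smooth_on_interval R w" and wpos: "\<forall>t\<in>{0..R}. w t > 0" and w0: "w 0 = 1"
    and eig: "is_eigenfunction p R w \<alpha> (lam_bar p R w \<alpha>) u du"
    and upos: "\<forall>t\<in>{0..R}. u t > 0"
begin

abbreviation "L \<equiv> lam_bar p R w \<alpha>"

lemma upos': "t \<in> {0..R} \<Longrightarrow> u t > 0" using upos by blast
lemma wpos': "t \<in> {0..R} \<Longrightarrow> w t > 0" using wpos by blast

lemma w_der: "t \<in> {0..R} \<Longrightarrow> (w has_real_derivative deriv w t) (at t)"
proof -
  assume t: "t \<in> {0..R}"
  have "((deriv ^^ 0) w has_real_derivative (deriv ^^ Suc 0) w t) (at t)"
    using sm t unfolding smooth_on_interval_def by blast
  then show ?thesis by simp
qed

lemma w'_der: "t \<in> {0..R} \<Longrightarrow> (deriv w has_real_derivative deriv (deriv w) t) (at t)"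
proof -
  assume t: "t \<in> {0..R}"
  have "((deriv ^^ 1) w has_real_derivative (deriv ^^ Suc 1) w t) (at t)"
    using sm t unfolding smooth_on_interval_def by blast
  then show ?thesis by (simp add: numeral_2_eq_2)
qed

lemma u_der: "t \<in> {0..R} \<Longrightarrow> (u has_real_derivative du t) (at t within {0..R})"
  using eig unfolding is_eigenfunction_def by blast

lemma P_der: "t \<in> {0..R} \<Longrightarrow> ((\<lambda>s. spow p (du s)) has_real_derivative
          (- L * spow p (u t) - deriv w t / w t * spow p (du t))) (at t within {0..R})"
  using eig unfolding is_eigenfunction_def by blast

lemma du_cont: "continuous_on {0..R} du" using eig unfolding is_eigenfunction_def by blast
lemma bc0: "spow p (du 0) = \<alpha> * spow p (u 0)" using eig unfolding is_eigenfunction_def by blast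
lemma bcR: "du R = 0" using eig unfolding is_eigenfunction_def by blast

lemma F_der: "t \<in> {0..R} \<Longrightarrow> ((\<lambda>s. w s * spow p (du s)) has_real_derivative
          (- L * w t * spow p (u t))) (at t within {0..R})"
proof -
  assume t: "t \<in> {0..R}"
  have wt: "w t > 0" using wpos t by auto
  note d = DERIV_mult[OF has_field_derivative_at_within[OF w_der[OF t]] P_der[OF t]]
  moreover have "deriv w t * spow p (du t) + (- L * spow p (u t) - deriv w t / w t * spow p (du t)) * w t
     = - L * w t * spow p (u t)" using wt by (simp add: field_simps)
  ultimately show ?thesis by simp
qed

lemma F_cont: "continuous_on {0..R} (\<lambda>s. w s * spow p (du s))"
  by (rule DERIV_continuous_on[OF F_der])

lemma F_der_at: "0 < t \<Longrightarrow> t < R \<Longrightarrow> ((\<lambda>s. w s * spow p (du s)) has_real_derivative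
          (- L * w t * spow p (u t))) (at t)"
  using F_der[of t] at_within_Icc_at[of 0 t R] by auto

lemma F0: "w 0 * spow p (du 0) = \<alpha> * u 0 powr (p-1)"
  using bc0 w0 upos R0 spow_pos[of "u 0" p] by auto

lemma FR: "w R * spow p (du R) = 0" using bcR by simp

lemma pos_case:
  assumes "\<alpha> > 0"
  shows "L > 0" "\<forall>t\<in>{0..<R}. du t > 0"
proof -
  have u0: "u 0 > 0" using upos R0 by auto
  have F0p: "w 0 * spow p (du 0) > 0" using F0 assms u0 by simp
  show Lp: "L > 0"
  proof (rule ccontr)
    assume "\<not> L > 0"
    hence "w 0 * spow p (du 0) \<le> w R * spow p (du R)"
    proof (intro DERIV_nonneg_imp_increasing_open[OF less_imp_le[OF R0] _ F_cont])
      fix x assume x: "0 < x" "x < R"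
      have "w x > 0" "u x > 0" using wpos upos x by auto
      hence "- L * w x * spow p (u x) \<ge> 0" using \<open>\<not> L > 0\<close> spow_gt0_iff[of p "u x"]
        by (simp add: mult_nonneg_nonneg mult_nonpos_nonneg)
      thus "\<exists>y. DERIV (\<lambda>s. w s * spow p (du s)) x :> y \<and> y \<ge> 0" using F_der_at[OF x] by blast
    qed
    thus False using F0p FR by simp
  qed
  show "\<forall>t\<in>{0..<R}. du t > 0"
  proof
    fix t assume t: "t \<in> {0..<R}"
    have "w R * spow p (du R) < w t * spow p (du t)"
    proof (rule DERIV_neg_imp_decreasing_open[where f="\<lambda>s. w s * spow p (du s)"])
      show "t < R" using t by auto
      show "\<exists>y. DERIV (\<lambda>s. w s * spow p (du s)) x :> y \<and> y < 0" if "t < x" "x < R" for x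
      proof -
        have "w x > 0" "u x > 0" using wpos upos that t by auto
        hence "- L * w x * spow p (u x) < 0" using Lp spow_gt0_iff[of p "u x"] by (simp add: mult_pos_pos)
        thus ?thesis using F_der_at[of x] that t by auto
      qed
      show "continuous_on {t..R} (\<lambda>s. w s * spow p (du s))"
        using F_cont by (rule continuous_on_subset) (use t in auto)
    qed
    moreover have "w t > 0" using wpos t by auto
    ultimately have "spow p (du t) > 0" using FR by (simp add: zero_less_mult_iff)
    thus "du t > 0" by (simp add: spow_gt0_iff)
  qed
qed

lemma neg_case:
  assumes "\<alpha> < 0"
  shows "L < 0" "\<forall>t\<in>{0..<R}. du t < 0"
proof -
  have u0: "u 0 > 0" using upos R0 by auto
  have F0n: "w 0 * spow p (du 0) < 0" using F0 assms u0 by (simp add: mult_neg_pos)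
  show Ln: "L < 0"
  proof (rule ccontr)
    assume nL: "\<not> L < 0"
    have "w R * spow p (du R) \<le> w 0 * spow p (du 0)"
    proof (intro DERIV_nonpos_imp_decreasing_open[OF less_imp_le[OF R0] _ F_cont])
      fix x assume x: "0 < x" "x < R"
      have "w x > 0" "u x > 0" using wpos upos x by auto
      hence "- L * w x * spow p (u x) \<le> 0" using nL spow_gt0_iff[of p "u x"]
        by (simp add: mult_nonneg_nonneg)
      thus "\<exists>y. DERIV (\<lambda>s. w s * spow p (du s)) x :> y \<and> y \<le> 0" using F_der_at[OF x] by blast
    qed
    thus False using F0n FR by simp
  qed
  show "\<forall>t\<in>{0..<R}. du t < 0"
  proof
    fix t assume t: "t \<in> {0..<R}"
    have "w t * spow p (du t) < w R * spow p (du R)"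
    proof (rule DERIV_pos_imp_increasing_open[where f="\<lambda>s. w s * spow p (du s)"])
      show "t < R" using t by auto
      show "\<exists>y. DERIV (\<lambda>s. w s * spow p (du s)) x :> y \<and> y > 0" if "t < x" "x < R" for x
      proof -
        have wx: "w x > 0" and ux: "u x > 0" using wpos upos that t by auto
        have "- L > 0" using Ln by simp
        from mult_pos_pos[OF mult_pos_pos[OF this wx] ux[THEN spow_gt0_iff[of p, THEN iffD2]]]
        have "- L * w x * spow p (u x) > 0" .
        thus ?thesis using F_der_at[of x] that t by auto
      qed
      show "continuous_on {t..R} (\<lambda>s. w s * spow p (du s))"
        using F_cont by (rule continuous_on_subset) (use t in auto)
    qed
    moreover have "w t > 0" using wpos t by auto
    ultimately have "spow p (du t) < 0" using FR by (simp add: mult_less_0_iff)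
    thus "du t < 0" by (simp add: spow_lt0_iff)
  qed
qed

end

lemma spow_mult_self: "spow p a * a = \<bar>a\<bar> powr p"
proof (cases "a = 0")
  case False
  have 1: "spow p a * a = (sgn a * a) * \<bar>a\<bar> powr (p - 1)"
    unfolding spow_def by (simp only: ac_simps)
  have 2: "sgn a * a = \<bar>a\<bar> powr 1" using False by (cases "a > 0") auto
  have 3: "\<bar>a\<bar> powr 1 * \<bar>a\<bar> powr (p - 1) = \<bar>a\<bar> powr p"
    using powr_add[of "\<bar>a\<bar>" 1 "p - 1"] by simp
  show ?thesis by (metis 1 2 3)
qed simp

lemma abs_spow: "\<bar>spow p a\<bar> = \<bar>a\<bar> powr (p - 1)"
  by (simp add: spow_def abs_mult sgn_if)

lemma z_identity:
  fixes a b p L c P' :: real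
  assumes b: "b > 0" and p: "p > 1"
    and P': "P' = - L * spow p b - c * spow p a"
  shows "P' * b powr (1 - p) + (1 - p) * b powr (1 - p - of_nat 1) * a * spow p a
    = - L - c * (spow p a * b powr (1 - p)) - (p - 1) * \<bar>spow p a * b powr (1 - p)\<bar> powr (p / (p - 1))"
proof -
  have e1: "spow p b * b powr (1 - p) = 1"
    using b by (simp add: spow_pos flip: powr_add)
  have e2: "\<bar>spow p a * b powr (1 - p)\<bar> powr (p / (p - 1)) = \<bar>a\<bar> powr p * b powr (- p)"
  proof -
    have ex1: "(p - 1) * (p / (p - 1)) = p" using p by simp
    have ex2: "(1 - p) * (p / (p - 1)) = - p" using p by (simp add: field_simps)
    have "\<bar>spow p a * b powr (1 - p)\<bar> = \<bar>a\<bar> powr (p - 1) * b powr (1 - p)"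
      by (simp add: abs_mult abs_spow)
    hence "\<bar>spow p a * b powr (1 - p)\<bar> powr (p / (p - 1))
        = (\<bar>a\<bar> powr (p - 1)) powr (p / (p - 1)) * (b powr (1 - p)) powr (p / (p - 1))"
      by (simp add: powr_mult)
    also have "\<dots> = \<bar>a\<bar> powr ((p - 1) * (p / (p - 1))) * b powr ((1 - p) * (p / (p - 1)))"
      by (simp only: powr_powr)
    also have "\<dots> = \<bar>a\<bar> powr p * b powr (- p)" by (simp only: ex1 ex2)
    finally show ?thesis .
  qed
  have e3: "b powr (1 - p - of_nat 1) = b powr (- p)" by simp
  have "P' * b powr (1 - p) = - L * (spow p b * b powr (1 - p)) - c * (spow p a * b powr (1 - p))"
    unfolding P' by (simp add: algebra_simps)
  also have "\<dots> = - L - c * (spow p a * b powr (1 - p))" using e1 by simp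
  finally have A: "P' * b powr (1 - p) = - L - c * (spow p a * b powr (1 - p))" .
  have B: "(1 - p) * b powr (1 - p - of_nat 1) * a * spow p a = - (p - 1) * (\<bar>a\<bar> powr p * b powr (- p))"
  proof -
    have "(1 - p) * b powr (1 - p - of_nat 1) * a * spow p a = (1 - p) * b powr (- p) * (spow p a * a)"
      using e3 by (simp only: ac_simps)
    also have "\<dots> = (1 - p) * b powr (- p) * \<bar>a\<bar> powr p" by (simp only: spow_mult_self)
    finally show ?thesis by (simp add: algebra_simps)
  qed
  show ?thesis by (simp only: A B e2)
qed

context eig begin

definition "z t = spow p (du t) * u t powr (1 - p)"
definition "qq = p / (p - 1)"
definition "G t = - L - deriv w t / w t * z t - (p - 1) * \<bar>z t\<bar> powr qq"

lemma int_at: "0 < t \<Longrightarrow> t < R \<Longrightarrow> at t within {0..R} = at t"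
  by (rule at_within_Icc_at)

lemma z_der: assumes t: "0 < t" "t < R" shows "(z has_real_derivative G t) (at t)"
proof -
  have tt: "t \<in> {0..R}" using t by auto
  have P: "((\<lambda>s. spow p (du s)) has_real_derivative
          (- L * spow p (u t) - deriv w t / w t * spow p (du t))) (at t)"
    using P_der[OF tt] int_at[OF t] by simp
  have U: "(u has_real_derivative du t) (at t)" using u_der[OF tt] int_at[OF t] by simp
  note U2 = DERIV_fun_powr[OF U, of "1 - p"]
  have "u t > 0" using upos tt by auto
  note D = DERIV_mult[OF P U2[OF this]]
  have iden: "(- L * spow p (u t) - deriv w t / w t * spow p (du t)) * u t powr (1 - p) +
      (1 - p) * u t powr (1 - p - of_nat 1) * du t * spow p (du t) = G t"
    unfolding G_def z_def qq_def by (rule z_identity[OF \<open>u t > 0\<close> p1 refl])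
  have zeq: "(\<lambda>s. spow p (du s) * u s powr (1 - p)) = z" by (simp add: z_def fun_eq_iff)
  show ?thesis unfolding zeq[symmetric] by (rule DERIV_cong[OF D iden])
qed

lemma z_cont: "continuous_on {0..R} z"
proof -
  have "continuous_on {0..R} (\<lambda>s. spow p (du s))" by (rule DERIV_continuous_on[OF P_der])
  moreover have "continuous_on {0..R} u" by (rule DERIV_continuous_on[OF u_der])
  ultimately show ?thesis unfolding z_def[abs_def] using upos
    by (intro continuous_intros) auto
qed

lemma z0: "z 0 = \<alpha>"
proof -
  have "u 0 > 0" using upos R0 by auto
  thus ?thesis unfolding z_def bc0 using spow_pos[of "u 0" p] by (simp flip: powr_add)
qed

lemma zR: "z R = 0" unfolding z_def bcR by simp

end

lemma powr_le_cancel_nonneg: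
  fixes x y a :: real
  assumes "0 < a" "0 \<le> x" "0 \<le> y" "x powr a \<le> y powr a"
  shows "x \<le> y"
proof (rule ccontr)
  assume "\<not> x \<le> y"
  hence "y powr a < x powr a" using powr_less_mono2[of a y x] assms by auto
  thus False using assms by auto
qed

context eig begin

definition "D1 t = (deriv (deriv w) t * w t - deriv w t * deriv w t) / (w t * w t)"

lemma dlogw_der: assumes t: "0 < t" "t < R"
  shows "((\<lambda>s. deriv w s / w s) has_real_derivative D1 t) (at t)"
proof -
  have tt: "t \<in> {0..R}" using t by auto
  have "w t > 0" using wpos tt by blast
  hence "w t \<noteq> 0" by simp
  show ?thesis unfolding D1_def by (rule DERIV_divide[OF w'_der[OF tt] w_der[OF tt] \<open>w t \<noteq> 0\<close>])
qed

lemma D1_eq: assumes t: "0 < t" "t < R"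
  shows "deriv (deriv (\<lambda>s. ln (w s))) t = D1 t"
proof -
  have eq: "deriv w s / w s = deriv (\<lambda>s. ln (w s)) s" if s: "s \<in> {0<..<R}" for s
  proof -
    have ss: "s \<in> {0..R}" using s by auto
    have "w s > 0" using wpos ss by auto
    from DERIV_chain2[OF DERIV_ln_divide[OF this] w_der[OF ss]]
    have "((\<lambda>s. ln (w s)) has_real_derivative deriv w s / w s) (at s)" by simp
    thus ?thesis by (simp add: DERIV_imp_deriv)
  qed
  have "(deriv (\<lambda>s. ln (w s)) has_real_derivative D1 t) (at t)"
    by (rule has_field_derivative_transform_within_open[OF dlogw_der[OF t], where S="{0<..<R}", OF _ _ eq])
       (use t in auto)
  thus ?thesis by (simp add: DERIV_imp_deriv)
qed

lemma G_der: assumes t: "0 < t" "t < R" and zt: "z t \<noteq> 0" and G0: "G t = 0"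
  shows "(G has_real_derivative - D1 t * z t) (at t)"
proof -
  note A1 = dlogw_der[OF t]
  note A2 = z_der[OF t]
  note A3 = DERIV_chain2[OF abs_powr_der[OF zt, of qq] A2]
  note A12 = DERIV_mult[OF A1 A2]
  note All = DERIV_diff[OF DERIV_diff[OF DERIV_const[of "-L"] A12] DERIV_cmult[OF A3, of "p - 1"]]
  have Geq: "G = (\<lambda>s. - L - deriv w s / w s * z s - (p - 1) * \<bar>z s\<bar> powr qq)"
    by (simp add: G_def fun_eq_iff)
  show ?thesis unfolding Geq by (rule DERIV_cong[OF All]) (simp add: G0)
qed

lemma pos_z: assumes "\<alpha> > 0" "t \<in> {0..<R}" shows "z t > 0"
proof -
  have "du t > 0" using pos_case(2)[OF assms(1)] assms(2) by auto
  moreover have "u t > 0" using upos assms(2) by auto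
  ultimately show ?thesis unfolding z_def by (simp add: spow_gt0_iff)
qed

lemma part4:
  assumes ap: "\<alpha> > 0" and lc: "\<forall>t\<in>{0..<R}. deriv (deriv (\<lambda>s. ln (w s))) t < 0"
  shows "(\<forall>s\<in>{0..R}. \<forall>t\<in>{0..R}. s \<le> t \<longrightarrow> du t / u t \<le> du s / u s)
      \<and> (\<forall>t\<in>{0..R}. \<bar>du t / u t\<bar> powr (p - 1) \<le> \<alpha>)"
proof -
  have Gle: "G t \<le> 0" if t: "0 < t" "t < R" for t
  proof (rule no_pos_slope[OF R0 z_cont z_der _ _ t])
    fix s assume s: "0 < s" "s < R"
    show "z R < z s" using zR pos_z[OF ap, of s] s by auto
    assume G0: "G s = 0"
    have "deriv (deriv (\<lambda>s. ln (w s))) s < 0" using lc s by auto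
    hence "D1 s < 0" using D1_eq[OF s] by simp
    hence "- D1 s * z s > 0" using pos_z[OF ap, of s] s by (simp add: mult_neg_pos)
    from DERIV_pos_inc_left[OF G_der[OF s _ G0] this]
    show "\<exists>d>0. \<forall>h>0. h < d \<longrightarrow> G (s - h) < 0" using G0 pos_z[OF ap, of s] s by auto
  qed
  have zmono: "z t \<le> z s" if st: "s \<in> {0..R}" "t \<in> {0..R}" "s \<le> t" for s t
  proof (rule DERIV_nonpos_imp_decreasing_open[OF st(3)])
    show "\<exists>y. DERIV z x :> y \<and> y \<le> 0" if "s < x" "x < t" for x
      using z_der[of x] Gle[of x] that st by auto
    show "continuous_on {s..t} z" using z_cont by (rule continuous_on_subset) (use st in auto)
  qed
  have dun: "du t \<ge> 0" if "t \<in> {0..R}" for t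
  proof (cases "t = R")
    case False
    hence "t \<in> {0..<R}" using that by auto
    thus ?thesis using pos_case(2)[OF ap] by (meson less_imp_le)
  qed (use bcR in auto)
  have zr: "z t = (du t / u t) powr (p - 1)" if t: "t \<in> {0..R}" for t
  proof (cases "du t = 0")
    case True thus ?thesis by (simp add: z_def)
  next
    case False
    hence "du t > 0" using dun[OF t] by auto
    moreover have "u t > 0" using upos t by auto
    ultimately show ?thesis unfolding z_def
      by (simp add: spow_pos powr_divide powr_minus_divide[of "u t" "p - 1", simplified] powr_mult inverse_powr divide_inverse)
  qed
  have rnn: "du t / u t \<ge> 0" if "t \<in> {0..R}" for t using dun[OF that] upos'[OF that] by auto
  show ?thesis
  proof (intro conjI ballI impI)
    fix s t assume st: "s \<in> {0..R}" "t \<in> {0..R}" "s \<le> t"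
    show "du t / u t \<le> du s / u s"
      using powr_le_cancel_nonneg[of "p - 1" "du t / u t" "du s / u s"] zmono[OF st] zr[OF st(1)] zr[OF st(2)]
        rnn[OF st(1)] rnn[OF st(2)] p1 by auto
  next
    fix t assume t: "t \<in> {0..R}"
    have "\<bar>du t / u t\<bar> = du t / u t" using rnn[OF t] by (rule abs_of_nonneg)
    hence "\<bar>du t / u t\<bar> powr (p - 1) = z t" using zr[OF t] by simp
    also have "\<dots> \<le> z 0" using zmono[OF _ t] t by auto
    finally show "\<bar>du t / u t\<bar> powr (p - 1) \<le> \<alpha>" using z0 by simp
  qed
qed

lemma neg_z: assumes "\<alpha> < 0" "t \<in> {0..<R}" shows "z t < 0"
proof -
  have "du t < 0" using neg_case(2)[OF assms(1)] assms(2) by auto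
  moreover have "u t > 0" using upos' assms(2) by auto
  ultimately show ?thesis unfolding z_def by (simp add: spow_lt0_iff mult_neg_pos)
qed

lemma part5:
  assumes an: "\<alpha> < 0" and lc: "\<forall>t\<in>{0..<R}. deriv (deriv (\<lambda>s. ln (w s))) t < 0"
  shows "(\<forall>s\<in>{0..R}. \<forall>t\<in>{0..R}. s \<le> t \<longrightarrow> du s / u s \<le> du t / u t)
      \<and> (\<forall>t\<in>{0..R}. \<bar>du t / u t\<bar> powr (p - 1) \<le> - \<alpha>)"
proof -
  have Gge: "- G t \<le> 0" if t: "0 < t" "t < R" for t
  proof (rule no_pos_slope[OF R0 _ _ _ _ t, where z="\<lambda>s. - z s"])
    show "continuous_on {0..R} (\<lambda>s. - z s)" using z_cont by (intro continuous_intros)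
    show "((\<lambda>s. - z s) has_real_derivative - G s) (at s)" if "0 < s" "s < R" for s
      using DERIV_minus[OF z_der[OF that]] .
    fix s assume s: "0 < s" "s < R"
    show "- z R < - z s" using zR neg_z[OF an, of s] s by auto
    assume G0: "- G s = 0"
    have "deriv (deriv (\<lambda>s. ln (w s))) s < 0" using lc s by auto
    hence "D1 s < 0" using D1_eq[OF s] by simp
    hence "D1 s * z s > 0" using neg_z[OF an, of s] s by (simp add: mult_neg_neg)
    moreover have "((\<lambda>x. - G x) has_real_derivative - (- D1 s * z s)) (at s)"
      using DERIV_minus[OF G_der[OF s _]] G0 neg_z[OF an, of s] s by auto
    ultimately have "((\<lambda>x. - G x) has_real_derivative D1 s * z s) (at s)" "D1 s * z s > 0" by auto
    from DERIV_pos_inc_left[OF this]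
    show "\<exists>d>0. \<forall>h>0. h < d \<longrightarrow> - G (s - h) < 0" using G0 by auto
  qed
  have zmono: "z s \<le> z t" if st: "s \<in> {0..R}" "t \<in> {0..R}" "s \<le> t" for s t
  proof (rule DERIV_nonneg_imp_increasing_open[OF st(3)])
    show "\<exists>y. DERIV z x :> y \<and> y \<ge> 0" if "s < x" "x < t" for x
      using z_der[of x] Gge[of x] that st by auto
    show "continuous_on {s..t} z" using z_cont by (rule continuous_on_subset) (use st in auto)
  qed
  have dun: "du t \<le> 0" if "t \<in> {0..R}" for t
  proof (cases "t = R")
    case False
    hence "t \<in> {0..<R}" using that by auto
    thus ?thesis using neg_case(2)[OF an] by (meson less_imp_le)
  qed (use bcR in auto)
  have zr: "z t = - (\<bar>du t / u t\<bar> powr (p - 1))" if t: "t \<in> {0..R}" for t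
  proof (cases "du t = 0")
    case True thus ?thesis by (simp add: z_def)
  next
    case False
    hence "du t < 0" using dun[OF t] by auto
    moreover have "u t > 0" using upos' t by auto
    ultimately have e: "\<bar>du t / u t\<bar> = (- du t) / u t" by (simp add: abs_divide)
    have pd: "((- du t) / u t) powr (p - 1) = (- du t) powr (p - 1) / u t powr (p - 1)" by (rule powr_divide)
    have um: "u t powr (1 - p) = 1 / u t powr (p - 1)" using powr_minus_divide[of "u t" "p - 1"] by simp
    show ?thesis unfolding z_def e spow_neg[OF \<open>du t < 0\<close>] pd um by simp
  qed
  have rnp: "du t / u t \<le> 0" if "t \<in> {0..R}" for t using dun[OF that] upos'[OF that]
    by (simp add: divide_nonpos_pos)
  show ?thesis
  proof (intro conjI ballI impI)
    fix s t assume st: "s \<in> {0..R}" "t \<in> {0..R}" "s \<le> t"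
    have "\<bar>du t / u t\<bar> \<le> \<bar>du s / u s\<bar>"
      using powr_le_cancel_nonneg[of "p - 1" "\<bar>du t / u t\<bar>" "\<bar>du s / u s\<bar>"] zmono[OF st] zr[OF st(1)] zr[OF st(2)]
        p1 by auto
    moreover have "\<bar>du t / u t\<bar> = - (du t / u t)" using rnp[OF st(2)] by (rule abs_of_nonpos)
    moreover have "\<bar>du s / u s\<bar> = - (du s / u s)" using rnp[OF st(1)] by (rule abs_of_nonpos)
    ultimately show "du s / u s \<le> du t / u t" by linarith
  next
    fix t assume t: "t \<in> {0..R}"
    have "\<bar>du t / u t\<bar> powr (p - 1) = - z t" using zr[OF t] by simp
    also have "\<dots> \<le> - z 0" using zmono[OF _ t] t by auto
    finally show "\<bar>du t / u t\<bar> powr (p - 1) \<le> - \<alpha>" using z0 by simp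
  qed
qed

end

lemma spow_nonneg_eq: "0 \<le> x \<Longrightarrow> spow p x = x powr (p - 1)"
  by (cases "x = 0") (auto simp: spow_def)

lemma spow_nonpos_eq: "x \<le> 0 \<Longrightarrow> spow p x = - ((- x) powr (p - 1))"
  by (cases "x = 0") (auto simp: spow_def)

lemma spow_cont: assumes p: "p > 1" shows "continuous_on UNIV (spow p)"
proof -
  have "continuous_on {0..} (\<lambda>x::real. x powr (p - 1))"
    by (rule continuous_on_powr') (use p in \<open>auto intro: continuous_intros\<close>)
  hence c1: "continuous_on {0..} (spow p)"
    by (rule continuous_on_eq) (simp add: spow_nonneg_eq)
  have "continuous_on {..0} (\<lambda>x::real. - ((- x) powr (p - 1)))"
    by (intro continuous_on_minus continuous_on_powr') (use p in \<open>auto intro: continuous_intros\<close>)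
  hence c2: "continuous_on {..0} (spow p)"
    by (rule continuous_on_eq) (simp add: spow_nonpos_eq)
  have "continuous_on ({0..} \<union> {..0}) (spow p)"
    by (rule continuous_on_closed_Un[OF closed_atLeast closed_atMost c1 c2])
  moreover have "{0..} \<union> {..0} = (UNIV :: real set)" by auto
  ultimately show ?thesis by simp
qed

lemma young_tangent:
  fixes a s p :: real
  assumes p: "p > 1" and a: "a \<ge> 0" and s: "s \<ge> 0"
  shows "p * s powr (p - 1) * a \<le> a powr p + (p - 1) * s powr p"
proof -
  define q where "q = p / (p - 1)"
  have q1: "q > 1" using p by (simp add: q_def field_simps)
  have pq: "1 / p + 1 / q = 1" using p by (simp add: q_def field_simps)
  have "a * s powr (p - 1) \<le> a powr p / p + (s powr (p - 1)) powr q / q"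
    by (rule Youngs_inequality[OF p q1 pq a]) simp
  also have "(s powr (p - 1)) powr q = s powr p"
    using p by (simp add: powr_powr q_def)
  finally have "a * s powr (p - 1) \<le> a powr p / p + s powr p / q" .
  hence "p * (a * s powr (p - 1)) \<le> p * (a powr p / p + s powr p / q)"
    using p by (simp add: mult_left_mono)
  also have "\<dots> = a powr p + (p - 1) * s powr p" using p by (simp add: q_def field_simps)
  finally show ?thesis by (simp add: algebra_simps)
qed

lemma spow_mult_self': "spow p a * a = \<bar>a\<bar> powr p"
proof (cases "a = 0")
  case False
  have 1: "spow p a * a = (sgn a * a) * \<bar>a\<bar> powr (p - 1)"
    unfolding spow_def by (simp only: ac_simps)
  have 2: "sgn a * a = \<bar>a\<bar> powr 1" using False by (cases "a > 0") auto
  have 3: "\<bar>a\<bar> powr 1 * \<bar>a\<bar> powr (p - 1) = \<bar>a\<bar> powr p"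
    using powr_add[of "\<bar>a\<bar>" 1 "p - 1"] by simp
  show ?thesis by (metis 1 2 3)
qed (simp add: spow_def)

lemma pow_convex:
  fixes x y p :: real
  assumes p: "p > 1"
  shows "\<bar>y\<bar> powr p - \<bar>x\<bar> powr p \<le> p * spow p y * (y - x)"
proof -
  have "spow p y * x \<le> \<bar>y\<bar> powr (p - 1) * \<bar>x\<bar>"
  proof -
    have "spow p y * x \<le> \<bar>spow p y * x\<bar>" by simp
    also have "\<dots> = \<bar>y\<bar> powr (p - 1) * \<bar>x\<bar>" by (simp add: spow_def abs_mult sgn_if)
    finally show ?thesis .
  qed
  hence "p * (spow p y * x) \<le> p * (\<bar>y\<bar> powr (p - 1) * \<bar>x\<bar>)" using p by simp
  also have "\<dots> \<le> \<bar>x\<bar> powr p + (p - 1) * \<bar>y\<bar> powr p"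
    using young_tangent[OF p, of "\<bar>x\<bar>" "\<bar>y\<bar>"] by (simp add: algebra_simps)
  finally have A: "p * (spow p y * x) \<le> \<bar>x\<bar> powr p + (p - 1) * \<bar>y\<bar> powr p" .
  have "p * spow p y * (y - x) = p * (spow p y * y) - p * (spow p y * x)" by (simp add: algebra_simps)
  also have "\<dots> = p * \<bar>y\<bar> powr p - p * (spow p y * x)" by (simp only: spow_mult_self')
  finally have B: "p * spow p y * (y - x) = p * \<bar>y\<bar> powr p - p * (spow p y * x)" .
  have A': "p * (spow p y * x) \<le> \<bar>x\<bar> powr p + p * \<bar>y\<bar> powr p - \<bar>y\<bar> powr p"
    using A by (simp add: algebra_simps)
  show ?thesis using A' B by linarith
qed

lemma partition_mono:
  fixes \<Phi> M :: "real \<Rightarrow> real" and a b :: real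
  assumes ab: "a \<le> b" and Mmono: "\<And>x y. a \<le> x \<Longrightarrow> x \<le> y \<Longrightarrow> y \<le> b \<Longrightarrow> M x \<le> M y"
    and loc: "\<And>e. e > 0 \<Longrightarrow> \<exists>\<delta>>0. \<forall>x y. a \<le> x \<longrightarrow> x \<le> y \<longrightarrow> y \<le> b \<longrightarrow> y - x < \<delta> \<longrightarrow>
               \<Phi> y - \<Phi> x \<ge> - e * (M y - M x)"
  shows "\<Phi> a \<le> \<Phi> b"
proof -
  have main: "\<Phi> b - \<Phi> a \<ge> - e * (M b - M a)" if e: "e > 0" for e
  proof -
    obtain \<delta> where d: "\<delta> > 0" and dl: "\<forall>x y. a \<le> x \<longrightarrow> x \<le> y \<longrightarrow> y \<le> b \<longrightarrow> y - x < \<delta> \<longrightarrow>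
               \<Phi> y - \<Phi> x \<ge> - e * (M y - M x)" using loc[OF e] by blast
    obtain N :: nat where N: "(b - a) / \<delta> < real N" using reals_Archimedean2 by blast
    have "(b - a) / \<delta> \<ge> 0" using ab d by simp
    hence Npos: "N > 0" using N by (cases N) auto
    define c where "c = (b - a) / real N"
    define t where "t k = a + real k * c" for k :: nat
    have step: "(b - a) / real N < \<delta>" using N Npos d ab by (simp add: field_simps)
    have stepnn: "(b - a) / real N \<ge> 0" using ab by simp
    have tb: "a \<le> t k \<and> t k \<le> b" if "k \<le> N" for k
    proof -
      have "real k * ((b - a) / real N) \<le> real N * ((b - a) / real N)"
        by (rule mult_right_mono) (use that stepnn in auto)
      also have "\<dots> = b - a" using Npos by simp
      finally have "real k * ((b - a) / real N) \<le> b - a" .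
      moreover have "0 \<le> real k * ((b - a) / real N)" using stepnn by (rule mult_nonneg_nonneg[OF of_nat_0_le_iff])
      ultimately show ?thesis unfolding t_def c_def by linarith
    qed
    have tN: "t N = b" using Npos by (simp add: t_def c_def)
    have t0: "t 0 = a" by (simp add: t_def)
    have "\<Phi> b - \<Phi> a = (\<Sum>k<N. \<Phi> (t (Suc k)) - \<Phi> (t k))"
      using sum_lessThan_telescope[of "\<lambda>k. \<Phi> (t k)" N] tN t0 by simp
    also have "\<dots> \<ge> (\<Sum>k<N. - e * (M (t (Suc k)) - M (t k)))"
    proof (rule sum_mono)
      fix k assume k: "k \<in> {..<N}"
      have "t (Suc k) - t k = c" by (simp add: t_def algebra_simps)
      hence "t (Suc k) - t k = (b - a) / real N" by (simp add: c_def)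
      hence h: "a \<le> t k" "t k \<le> t (Suc k)" "t (Suc k) \<le> b" "t (Suc k) - t k < \<delta>"
        using tb[of k] tb[of "Suc k"] k step stepnn by (auto; linarith)+
      show "- e * (M (t (Suc k)) - M (t k)) \<le> \<Phi> (t (Suc k)) - \<Phi> (t k)"
        using dl h by blast
    qed
    also have "(\<Sum>k<N. - e * (M (t (Suc k)) - M (t k))) = - e * (M b - M a)"
    proof -
      have "(\<Sum>k<N. - e * (M (t (Suc k)) - M (t k))) = - e * (\<Sum>k<N. M (t (Suc k)) - M (t k))"
        by (rule sum_distrib_left[symmetric])
      also have "(\<Sum>k<N. M (t (Suc k)) - M (t k)) = M b - M a"
        using sum_lessThan_telescope[of "\<lambda>k. M (t k)" N] tN t0 by simp
      finally show ?thesis .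
    qed
    finally show ?thesis .
  qed
  have Mab: "M a \<le> M b" using Mmono[of a b] ab by simp
  show ?thesis
  proof (rule ccontr)
    assume "\<not> \<Phi> a \<le> \<Phi> b"
    hence gap: "\<Phi> a - \<Phi> b > 0" by simp
    define D where "D = M b - M a + 1"
    have Dp: "D > 0" using Mab by (simp add: D_def)
    define e where "e = (\<Phi> a - \<Phi> b) / (2 * D)"
    have e: "e > 0" using gap Dp by (simp add: e_def)
    have "e * (M b - M a) < \<Phi> a - \<Phi> b"
    proof -
      have "e * (M b - M a) \<le> e * D" using e by (simp add: D_def)
      also have "e * D = (\<Phi> a - \<Phi> b) / 2" using Dp by (simp add: e_def)
      finally show ?thesis using gap by simp
    qed
    thus False using main[OF e] by simp
  qed
qed

lemma uc_real:
  fixes f :: "real \<Rightarrow> real"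
  assumes "continuous_on {a..b} f" "\<eta> > 0"
  shows "\<exists>d>0. \<forall>x\<in>{a..b}. \<forall>y\<in>{a..b}. \<bar>x - y\<bar> < d \<longrightarrow> \<bar>f x - f y\<bar> < \<eta>"
proof -
  have "uniformly_continuous_on {a..b} f"
    by (rule compact_uniformly_continuous[OF assms(1) compact_Icc])
  then obtain d where d: "d > 0" "\<forall>x\<in>{a..b}. \<forall>x'\<in>{a..b}. dist x' x < d \<longrightarrow> dist (f x') (f x) < \<eta>"
    using assms(2) unfolding uniformly_continuous_on_def by metis
  show ?thesis using d unfolding dist_real_def by metis
qed

lemma bnd_real:
  fixes f :: "real \<Rightarrow> real"
  assumes "continuous_on {a..b} f"
  shows "\<exists>B\<ge>0. \<forall>x\<in>{a..b}. \<bar>f x\<bar> \<le> B"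
proof -
  have "bounded (f ` {a..b})"
    by (rule compact_imp_bounded[OF compact_continuous_image[OF assms compact_Icc]])
  then obtain B where "\<forall>y\<in>f ` {a..b}. norm y \<le> B" unfolding bounded_iff by blast
  hence "\<forall>x\<in>{a..b}. \<bar>f x\<bar> \<le> B" by auto
  moreover have "B \<ge> 0" if "a \<le> b" using \<open>\<forall>x\<in>{a..b}. \<bar>f x\<bar> \<le> B\<close> that
    by (meson abs_ge_zero atLeastAtMost_iff order.trans order_refl)
  ultimately show ?thesis
    by (cases "a \<le> b") (auto intro!: exI[of _ "\<bar>B\<bar>"])
qed

lemma prod_absint:
  fixes f h :: "real \<Rightarrow> real"
  assumes c: "continuous_on {a..b} f" and h: "h absolutely_integrable_on {a..b}"
  shows "(\<lambda>t. f t * h t) absolutely_integrable_on {a..b}"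
proof (rule absolutely_integrable_bounded_measurable_product_real)
  show "f \<in> borel_measurable (lebesgue_on {a..b})"
    by (rule continuous_imp_measurable_on_sets_lebesgue[OF c]) simp
  show "{a..b} \<in> sets lebesgue" by simp
  show "bounded (f ` {a..b})"
    by (rule compact_imp_bounded[OF compact_continuous_image[OF c compact_Icc]])
qed (rule h)

lemma absint_int: "h absolutely_integrable_on {a..b::real} \<Longrightarrow> (h :: real \<Rightarrow> real) integrable_on {a..b}"
  using set_lebesgue_integral_eq_integral(1) by blast

lemma picone_bound:
  fixes p b lam :: real and w Q Qd v g :: "real \<Rightarrow> real"
  assumes p: "p > 1" and b: "0 < b"
    and wc: "continuous_on {0..b} w"
    and Qc: "continuous_on {0..b} Q" and Qdc: "continuous_on {0..b} Qd"
    and Qder: "\<And>t. 0 < t \<Longrightarrow> t < b \<Longrightarrow> (Q has_real_derivative Qd t) (at t)"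
    and Qnn: "\<And>t. t \<in> {0..b} \<Longrightarrow> Q t \<ge> 0"
    and pw: "\<And>t vv gg. t \<in> {0..b} \<Longrightarrow> p * Q t * spow p vv * gg + Qd t * \<bar>vv\<bar> powr p
               \<le> \<bar>gg\<bar> powr p * w t - lam * (\<bar>vv\<bar> powr p * w t)"
    and gi: "g absolutely_integrable_on {0..b}"
    and gpi: "(\<lambda>t. \<bar>g t\<bar> powr p) integrable_on {0..b}"
    and vrep: "\<And>x. x \<in> {0..b} \<Longrightarrow> v x = v 0 + integral {0..x} g"
  shows "Q b * \<bar>v b\<bar> powr p - Q 0 * \<bar>v 0\<bar> powr p
     \<le> integral {0..b} (\<lambda>t. \<bar>g t\<bar> powr p * w t - lam * (\<bar>v t\<bar> powr p * w t))"
proof -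
  define S where "S t = spow p (v t)" for t
  define P where "P t = \<bar>v t\<bar> powr p" for t
  define I1 where "I1 t = \<bar>g t\<bar> powr p * w t - lam * (\<bar>v t\<bar> powr p * w t)" for t
  define I2 where "I2 t = p * Q t * S t * g t + Qd t * P t" for t
  have gint: "g integrable_on {0..b}" by (rule absint_int[OF gi])
  have agint: "(\<lambda>t. \<bar>g t\<bar>) integrable_on {0..b}"
    using gi unfolding absolutely_integrable_on_def by simp
  have vc: "continuous_on {0..b} v"
  proof (rule continuous_on_eq[OF _ vrep[symmetric]])
    show "continuous_on {0..b} (\<lambda>x. v 0 + integral {0..x} g)"
      by (intro continuous_intros indefinite_integral_continuous_1 gint)
  qed
  have Sc: "continuous_on {0..b} S" unfolding S_def
    by (rule continuous_on_compose2[OF spow_cont[OF p] vc]) auto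
  have Pc: "continuous_on {0..b} P" unfolding P_def
    by (rule continuous_on_powr') (use p in \<open>auto intro: continuous_intros vc\<close>)
  have I1int: "I1 integrable_on {0..b}"
  proof -
    have "(\<lambda>t. w t * \<bar>g t\<bar> powr p) absolutely_integrable_on {0..b}"
      by (rule prod_absint[OF wc nonnegative_absolutely_integrable_1[OF gpi]]) simp
    hence A: "(\<lambda>t. \<bar>g t\<bar> powr p * w t) integrable_on {0..b}"
      using absint_int by (simp add: mult.commute)
    have "continuous_on {0..b} (\<lambda>t. P t * w t)" by (intro continuous_intros Pc wc)
    hence B: "(\<lambda>t. \<bar>v t\<bar> powr p * w t) integrable_on {0..b}"
      unfolding P_def by (rule integrable_continuous_interval)
    show ?thesis unfolding I1_def by (intro integrable_diff A integrable_on_mult_right B)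
  qed
  have SQgint: "(\<lambda>t. (p * Q t * S t) * g t) integrable_on {0..b}"
    by (rule absint_int[OF prod_absint[OF _ gi]]) (intro continuous_intros Qc Sc)
  have QdPint: "(\<lambda>t. Qd t * P t) integrable_on {0..b}"
    by (intro integrable_continuous_interval continuous_intros Qdc Pc)
  define M where "M t = t + integral {0..t} (\<lambda>t. \<bar>g t\<bar>)" for t
  define \<Phi> where "\<Phi> x = integral {0..x} I1 - Q x * P x" for x
  have comb: "integral {0..y} f = integral {0..x} f + integral {x..y} f"
    if "f integrable_on {0..b}" "0 \<le> x" "x \<le> y" "y \<le> b" for f :: "real \<Rightarrow> real" and x y
  proof -
    have "f integrable_on {0..y}" by (rule integrable_on_subinterval[OF that(1)]) (use that in auto)
    from Henstock_Kurzweil_Integration.integral_combine[OF that(2,3) this] show ?thesis by simp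
  qed
  have sub: "f integrable_on {x..y}" if "f integrable_on {0..b}" "0 \<le> x" "y \<le> b" for f :: "real \<Rightarrow> real" and x y
    by (rule integrable_on_subinterval[OF that(1)]) (use that in auto)
  obtain BS where BS: "BS \<ge> 0" "\<forall>t\<in>{0..b}. \<bar>S t\<bar> \<le> BS" using bnd_real[OF Sc] by blast
  obtain BQ where BQ: "BQ \<ge> 0" "\<forall>t\<in>{0..b}. \<bar>Qd t\<bar> \<le> BQ" using bnd_real[OF Qdc] by blast
  have "\<Phi> 0 \<le> \<Phi> b"
  proof (rule partition_mono[of 0 b M \<Phi>])
    show "0 \<le> b" using b by simp
    show "M x \<le> M y" if "0 \<le> x" "x \<le> y" "y \<le> b" for x y
    proof -
      have "integral {0..y} (\<lambda>t. \<bar>g t\<bar>) = integral {0..x} (\<lambda>t. \<bar>g t\<bar>) + integral {x..y} (\<lambda>t. \<bar>g t\<bar>)"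
        by (rule comb[OF agint that])
      moreover have "integral {x..y} (\<lambda>t. \<bar>g t\<bar>) \<ge> 0"
        by (rule integral_nonneg[OF sub[OF agint]]) (use that in auto)
      ultimately show ?thesis using that by (simp add: M_def)
    qed
    fix e :: real assume e: "e > 0"
    define \<eta> where "\<eta> = e / ((p + 1) * (1 + BS + BQ))"
    have eta: "\<eta> > 0" using e p BS BQ by (simp add: \<eta>_def)
    obtain d1 where d1: "d1 > 0" "\<forall>x\<in>{0..b}. \<forall>y\<in>{0..b}. \<bar>x - y\<bar> < d1 \<longrightarrow> \<bar>Q x - Q y\<bar> < \<eta>"
      using uc_real[OF Qc eta] by blast
    obtain d2 where d2: "d2 > 0" "\<forall>x\<in>{0..b}. \<forall>y\<in>{0..b}. \<bar>x - y\<bar> < d2 \<longrightarrow> \<bar>Q x * S x - Q y * S y\<bar> < \<eta>"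
      using uc_real[OF continuous_on_mult[OF Qc Sc] eta] by blast
    obtain d3 where d3: "d3 > 0" "\<forall>x\<in>{0..b}. \<forall>y\<in>{0..b}. \<bar>x - y\<bar> < d3 \<longrightarrow> \<bar>P x - P y\<bar> < \<eta>"
      using uc_real[OF Pc eta] by blast
    obtain d4 where d4: "d4 > 0" "\<forall>x\<in>{0..b}. \<forall>y\<in>{0..b}. \<bar>x - y\<bar> < d4 \<longrightarrow> \<bar>Qd x * P x - Qd y * P y\<bar> < \<eta>"
      using uc_real[OF continuous_on_mult[OF Qdc Pc] eta] by blast
    define \<delta> where "\<delta> = min (min d1 d2) (min d3 d4)"
    have dpos: "\<delta> > 0" using d1 d2 d3 d4 by (simp add: \<delta>_def)
    show "\<exists>\<delta>>0. \<forall>x y. 0 \<le> x \<longrightarrow> x \<le> y \<longrightarrow> y \<le> b \<longrightarrow> y - x < \<delta> \<longrightarrow> - e * (M y - M x) \<le> \<Phi> y - \<Phi> x"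
    proof (intro exI[of _ \<delta>] conjI dpos allI impI)
      fix x y assume x0: "0 \<le> x" and xy: "x \<le> y" and yb: "y \<le> b" and yxd: "y - x < \<delta>"
      have xin: "x \<in> {0..b}" and yin: "y \<in> {0..b}" using x0 xy yb by auto
      have close: "\<bar>s - t\<bar> < \<delta>" if "s \<in> {x..y}" "t \<in> {x..y}" for s t
        using that yxd by (auto simp: abs_if)
      have inb: "s \<in> {0..b}" if "s \<in> {x..y}" for s using that x0 yb by auto
      obtain \<xi> where xi: "\<xi> \<in> {x..y}" "Q y - Q x = Qd \<xi> * (y - x)"
      proof (cases "x = y")
        case True thus ?thesis using that[of x] by auto
      next
        case False
        hence xy': "x < y" using xy by auto
        have "\<exists>l z. x < z \<and> z < y \<and> DERIV Q z :> l \<and> Q y - Q x = (y - x) * l"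
        proof (rule MVT[OF xy'])
          show "continuous_on {x..y} Q" using Qc by (rule continuous_on_subset) (use x0 yb in auto)
          show "Q differentiable at t" if "x < t" "t < y" for t
            using Qder[of t] that x0 yb real_differentiable_def by fastforce
        qed
        then obtain l \<zeta> where z: "x < \<zeta>" "\<zeta> < y" "DERIV Q \<zeta> :> l" "Q y - Q x = (y - x) * l" by blast
        have "l = Qd \<zeta>" using DERIV_unique[OF z(3) Qder[of \<zeta>]] z x0 yb by auto
        thus ?thesis using that[of \<zeta>] z by (auto simp: mult.commute)
      qed
      define A where "A = integral {x..y} g"
      define G1 where "G1 = integral {x..y} (\<lambda>t. \<bar>g t\<bar>)"
      have G1nn: "G1 \<ge> 0" unfolding G1_def
        by (rule integral_nonneg[OF sub[OF agint x0 yb]]) auto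
      have vdiff: "v y - v x = A"
        using vrep[OF yin] vrep[OF xin] comb[OF gint x0 xy yb] by (simp add: A_def)
      have Mdiff: "M y - M x = (y - x) + G1"
        using comb[OF agint x0 xy yb] by (simp add: M_def G1_def)
      have Phidiff: "\<Phi> y - \<Phi> x = integral {x..y} I1 - (Q y * P y - Q x * P x)"
        using comb[OF I1int x0 xy yb] by (simp add: \<Phi>_def)
      have I2int: "I2 integrable_on {x..y}"
        unfolding I2_def using sub[OF SQgint x0 yb] sub[OF QdPint x0 yb]
        by (intro integrable_add) (auto simp: mult.assoc)
      have I21: "integral {x..y} I2 \<le> integral {x..y} I1"
      proof (rule integral_le[OF I2int sub[OF I1int x0 yb]])
        fix t assume "t \<in> {x..y}"
        hence "t \<in> {0..b}" by (rule inb)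
        thus "I2 t \<le> I1 t" unfolding I2_def I1_def S_def P_def by (rule pw)
      qed
      have QP: "Q y * P y - Q x * P x \<le> Q x * (p * S y * A) + Qd \<xi> * (y - x) * P y"
      proof -
        have "P y - P x \<le> p * S y * (v y - v x)" unfolding P_def S_def by (rule pow_convex[OF p])
        hence "Q x * (P y - P x) \<le> Q x * (p * S y * A)" using Qnn[OF xin] vdiff
          by (simp add: mult_left_mono)
        moreover have "Q y * P y - Q x * P x = Q x * (P y - P x) + (Q y - Q x) * P y"
          by (simp add: algebra_simps)
        ultimately show ?thesis using xi(2) by simp
      qed
      define J1 where "J1 = integral {x..y} (\<lambda>t. p * Q t * S t * g t - (p * Q x * S y) * g t)"
      define J2 where "J2 = integral {x..y} (\<lambda>t. Qd t * P t - Qd \<xi> * P y)"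
      have i1: "(\<lambda>t. p * Q t * S t * g t) integrable_on {x..y}" by (rule sub[OF SQgint x0 yb])
      have i2: "(\<lambda>t. (p * Q x * S y) * g t) integrable_on {x..y}"
        by (rule integrable_on_mult_right[OF sub[OF gint x0 yb]])
      have f1int: "(\<lambda>t. p * Q t * S t * g t - (p * Q x * S y) * g t) integrable_on {x..y}"
        by (rule integrable_diff[OF i1 i2])
      have f2int: "(\<lambda>t. Qd t * P t - Qd \<xi> * P y) integrable_on {x..y}"
        using sub[OF QdPint x0 yb] by (intro integrable_diff) auto
      have I2eq: "integral {x..y} I2 = J1 + J2 + Q x * (p * S y * A) + Qd \<xi> * (y - x) * P y"
      proof -
        have "integral {x..y} I2 = integral {x..y} (\<lambda>t. p * Q t * S t * g t) + integral {x..y} (\<lambda>t. Qd t * P t)"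
          unfolding I2_def using sub[OF SQgint x0 yb] sub[OF QdPint x0 yb]
          by (intro integral_add) (auto simp: mult.assoc)
        moreover have "J1 = integral {x..y} (\<lambda>t. p * Q t * S t * g t) - (p * Q x * S y) * A"
          unfolding J1_def A_def by (simp only: integral_diff[OF i1 i2] integral_mult_right)
        moreover have "J2 = integral {x..y} (\<lambda>t. Qd t * P t) - Qd \<xi> * P y * (y - x)"
          unfolding J2_def using sub[OF QdPint x0 yb] xy
          by (subst integral_diff) (auto simp: content_real)
        ultimately show ?thesis by (simp add: algebra_simps)
      qed
      have J1b: "J1 \<ge> - (p * (\<eta> + \<eta> * BS) * G1)"
      proof -
        have "norm J1 \<le> integral {x..y} (\<lambda>t. p * (\<eta> + \<eta> * BS) * \<bar>g t\<bar>)"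
          unfolding J1_def
        proof (rule integral_norm_bound_integral[OF f1int])
          show "(\<lambda>t. p * (\<eta> + \<eta> * BS) * \<bar>g t\<bar>) integrable_on {x..y}"
            by (rule integrable_on_mult_right[OF sub[OF agint x0 yb]])
          fix t assume t: "t \<in> {x..y}"
          have tb: "t \<in> {0..b}" by (rule inb[OF t])
          have "\<bar>Q t * S t - Q x * S y\<bar> \<le> \<eta> + \<eta> * BS"
          proof -
            have "\<bar>Q t * S t - Q y * S y\<bar> < \<eta>" using d2 tb yin close[OF t, of y] xy
              by (auto simp: \<delta>_def)
            moreover have "\<bar>Q y - Q x\<bar> < \<eta>" using d1 xin yin close[of y x] xy by (auto simp: \<delta>_def)
            moreover have "\<bar>S y\<bar> \<le> BS" using BS yin by auto
            ultimately have "\<bar>(Q y - Q x) * S y\<bar> \<le> \<eta> * BS"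
              by (simp add: abs_mult mult_mono')
            moreover have "Q t * S t - Q x * S y = (Q t * S t - Q y * S y) + (Q y - Q x) * S y"
              by (simp add: algebra_simps)
            ultimately show ?thesis using \<open>\<bar>Q t * S t - Q y * S y\<bar> < \<eta>\<close> by linarith
          qed
          hence "p * \<bar>Q t * S t - Q x * S y\<bar> * \<bar>g t\<bar> \<le> p * (\<eta> + \<eta> * BS) * \<bar>g t\<bar>"
            using p by (simp add: mult_right_mono)
          moreover have "p * Q t * S t * g t - p * Q x * S y * g t = p * (Q t * S t - Q x * S y) * g t"
            by (simp add: algebra_simps)
          ultimately show "norm (p * Q t * S t * g t - p * Q x * S y * g t) \<le> p * (\<eta> + \<eta> * BS) * \<bar>g t\<bar>"
            using p by (simp add: abs_mult)
        qed
        also have "\<dots> = p * (\<eta> + \<eta> * BS) * G1" by (simp add: G1_def)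
        finally show ?thesis by (simp add: abs_le_iff)
      qed
      have J2b: "J2 \<ge> - ((\<eta> + BQ * \<eta>) * (y - x))"
      proof -
        have "norm J2 \<le> integral {x..y} (\<lambda>t. \<eta> + BQ * \<eta>)"
          unfolding J2_def
        proof (rule integral_norm_bound_integral[OF f2int])
          show "(\<lambda>t. \<eta> + BQ * \<eta>) integrable_on {x..y}" by (rule integrable_const_ivl)
          fix t assume t: "t \<in> {x..y}"
          have tb: "t \<in> {0..b}" by (rule inb[OF t])
          have xib: "\<xi> \<in> {0..b}" by (rule inb[OF xi(1)])
          have "\<bar>Qd t * P t - Qd \<xi> * P \<xi>\<bar> < \<eta>" using d4 tb xib close[OF t xi(1)] by (auto simp: \<delta>_def)
          moreover have "\<bar>P \<xi> - P y\<bar> < \<eta>" using d3 xib yin close[OF xi(1), of y] xy by (auto simp: \<delta>_def)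
          moreover have "\<bar>Qd \<xi>\<bar> \<le> BQ" using BQ xib by auto
          ultimately have "\<bar>Qd \<xi> * (P \<xi> - P y)\<bar> \<le> BQ * \<eta>"
            by (simp add: abs_mult mult_mono')
          moreover have "Qd t * P t - Qd \<xi> * P y = (Qd t * P t - Qd \<xi> * P \<xi>) + Qd \<xi> * (P \<xi> - P y)"
            by (simp add: algebra_simps)
          ultimately show "norm (Qd t * P t - Qd \<xi> * P y) \<le> \<eta> + BQ * \<eta>"
            using \<open>\<bar>Qd t * P t - Qd \<xi> * P \<xi>\<bar> < \<eta>\<close> by simp
        qed
        also have "\<dots> = (\<eta> + BQ * \<eta>) * (y - x)" using xy by (simp add: content_real)
        finally show ?thesis by (simp add: abs_le_iff)
      qed
      have c1: "p * (\<eta> + \<eta> * BS) \<le> e"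
      proof -
        have "p * (\<eta> + \<eta> * BS) = \<eta> * (p * (1 + BS))" by (simp add: algebra_simps)
        also have "\<dots> \<le> \<eta> * ((p + 1) * (1 + BS + BQ))"
        proof (rule mult_left_mono)
          have "p * (1 + BS) \<le> (p + 1) * (1 + BS)" using BS by (simp add: mult_right_mono)
          also have "\<dots> \<le> (p + 1) * (1 + BS + BQ)" using BQ p by (simp add: mult_left_mono)
          finally show "p * (1 + BS) \<le> (p + 1) * (1 + BS + BQ)" .
        qed (use eta in simp)
        also have "\<dots> = e" using p BS BQ by (simp add: \<eta>_def)
        finally show ?thesis .
      qed
      have c2: "\<eta> + BQ * \<eta> \<le> e"
      proof -
        have "\<eta> + BQ * \<eta> = \<eta> * (1 + BQ)" by (simp add: algebra_simps)
        also have "\<dots> \<le> \<eta> * ((p + 1) * (1 + BS + BQ))"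
        proof (rule mult_left_mono)
          have "1 + BQ \<le> 1 + BS + BQ" using BS by simp
          also have "\<dots> \<le> (p + 1) * (1 + BS + BQ)" using p BS BQ by simp
          finally show "1 + BQ \<le> (p + 1) * (1 + BS + BQ)" .
        qed (use eta in simp)
        also have "\<dots> = e" using p BS BQ by (simp add: \<eta>_def)
        finally show ?thesis .
      qed
      have "\<Phi> y - \<Phi> x \<ge> J1 + J2"
        using Phidiff I21 QP I2eq by linarith
      moreover have "J1 \<ge> - (e * G1)"
        using J1b c1 G1nn by (smt (verit) mult_right_mono)
      moreover have "J2 \<ge> - (e * (y - x))"
        using J2b c2 xy by (smt (verit) mult_right_mono)
      moreover have "e * (M y - M x) = e * G1 + e * (y - x)" unfolding Mdiff by (simp add: algebra_simps)
      ultimately show "- e * (M y - M x) \<le> \<Phi> y - \<Phi> x" by linarith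
    qed
  qed
  moreover have "\<Phi> 0 = - (Q 0 * P 0)" by (simp add: \<Phi>_def)
  moreover have "\<Phi> b = integral {0..b} I1 - Q b * P b" by (simp add: \<Phi>_def)
  ultimately show ?thesis unfolding I1_def P_def by simp
qed

lemma set_int_mult_cont:
  fixes f h :: "real \<Rightarrow> real"
  assumes f: "set_integrable lborel {a..b} f" and h: "continuous_on {a..b} h"
  shows "set_integrable lborel {a..b} (\<lambda>t. f t * h t)"
proof -
  obtain B where B: "B \<ge> 0" "\<forall>x\<in>{a..b}. \<bar>h x\<bar> \<le> B" using bnd_real[OF h] by blast
  have fi: "integrable lborel (\<lambda>x. indicator {a..b} x *\<^sub>R f x)" using f by (simp add: set_integrable_def)
  have m1: "(\<lambda>x. indicator {a..b} x *\<^sub>R f x) \<in> borel_measurable lborel"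
    using fi by (rule borel_measurable_integrable)
  have m2: "(\<lambda>x. indicator {a..b} x *\<^sub>R h x) \<in> borel_measurable borel"
    by (rule borel_measurable_continuous_on_indicator[OF _ h]) simp
  have eq: "(\<lambda>x. indicator {a..b} x *\<^sub>R (f x * h x)) = (\<lambda>x. (indicator {a..b} x *\<^sub>R f x) * (indicator {a..b} x *\<^sub>R h x))"
    by (auto simp: fun_eq_iff indicator_def)
  show ?thesis unfolding set_integrable_def
  proof (rule Bochner_Integration.integrable_bound[OF integrable_mult_right[OF fi, of B]])
    show "(\<lambda>x. indicator {a..b} x *\<^sub>R (f x * h x)) \<in> borel_measurable lborel"
      unfolding eq using m1 m2 by (intro borel_measurable_times) auto
    show "AE x in lborel. norm (indicator {a..b} x *\<^sub>R (f x * h x)) \<le> norm (B * (indicator {a..b} x *\<^sub>R f x))"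
    proof (rule AE_I2)
      fix x show "norm (indicator {a..b} x *\<^sub>R (f x * h x)) \<le> norm (B * (indicator {a..b} x *\<^sub>R f x))"
      proof (cases "x \<in> {a..b}")
        case True
        hence "\<bar>h x\<bar> \<le> B" using B by auto
        hence "\<bar>f x\<bar> * \<bar>h x\<bar> \<le> \<bar>f x\<bar> * B" by (simp add: mult_left_mono)
        thus ?thesis using True B by (simp add: abs_mult mult.commute)
      qed simp
    qed
  qed
qed

lemma lborel_to_hk:
  fixes f :: "real \<Rightarrow> real"
  assumes "set_integrable lborel S f"
  shows "f integrable_on S" "(LBINT t:S. f t) = integral S f"
  using set_borel_integral_eq_integral[OF assms] by auto

lemma lborel_abs:
  fixes f :: "real \<Rightarrow> real"
  assumes "set_integrable lborel S f"
  shows "f absolutely_integrable_on S"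
proof -
  have "f integrable_on S" by (rule lborel_to_hk(1)[OF assms])
  moreover have "(\<lambda>t. \<bar>f t\<bar>) integrable_on S" by (rule lborel_to_hk(1)[OF set_integrable_abs[OF assms]])
  ultimately show ?thesis unfolding absolutely_integrable_on_def by simp
qed

context eig begin

lemma w_cont: "continuous_on {0..R} w"
  by (rule DERIV_continuous_on[OF has_field_derivative_at_within[OF w_der]])

lemma part3:
  assumes ap: "\<alpha> > 0" and Rb: "0 < Rb" "Rb < R"
  shows "L < lam_bar p Rb w \<alpha>"
proof -
  define b where "b = Rb"
  have b0: "0 < b" and bR: "b < R" using Rb by (auto simp: b_def)
  have inR: "t \<in> {0..R}" if "t \<in> {0..b}" for t using that bR by auto
  have inR': "t \<in> {0..<R}" if "t \<in> {0..b}" for t using that bR by auto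
  have zp: "z t > 0" if "t \<in> {0..b}" for t using pos_z[OF ap inR'[OF that]] .
  have wc: "continuous_on {0..b} w" using w_cont by (rule continuous_on_subset) (use bR in auto)
  have zc: "continuous_on {0..b} z" using z_cont by (rule continuous_on_subset) (use bR in auto)
  define H where "H t = \<bar>z t\<bar> powr qq" for t
  define Q0 where "Q0 t = w t * z t" for t
  define Qd0 where "Qd0 t = - L * w t - (p - 1) * w t * H t" for t
  have Q0der: "(Q0 has_real_derivative Qd0 t) (at t)" if t: "0 < t" "t < R" for t
  proof -
    have tt: "t \<in> {0..R}" using t by auto
    note D = DERIV_mult[OF w_der[OF tt] z_der[OF t]]
    have "w t > 0" using wpos' tt by blast
    hence "deriv w t * z t + G t * w t = Qd0 t"
      unfolding G_def Qd0_def H_def by (simp add: field_simps)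
    from DERIV_cong[OF D this] show ?thesis unfolding Q0_def[abs_def] .
  qed
  have Q0c: "continuous_on {0..b} Q0" unfolding Q0_def[abs_def] by (intro continuous_intros wc zc)
  have Hc: "continuous_on {0..b} H" unfolding H_def[abs_def]
  proof (rule continuous_on_powr)
    show "\<forall>x\<in>{0..b}. \<bar>z x\<bar> \<noteq> 0" using zp by force
  qed (auto intro: continuous_intros zc)
  have Qd0c: "continuous_on {0..b} Qd0" unfolding Qd0_def[abs_def] by (intro continuous_intros wc Hc)
  obtain tm where tm: "tm \<in> {0..b}" "\<forall>y\<in>{0..b}. Q0 tm \<le> Q0 y"
    using continuous_attains_inf[OF compact_Icc _ Q0c] b0 by fastforce
  define m where "m = Q0 tm"
  have mpos: "m > 0" unfolding m_def Q0_def using wpos'[OF inR[OF tm(1)]] zp[OF tm(1)] by simp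
  obtain tW where tW: "tW \<in> {0..b}" "\<forall>y\<in>{0..b}. w y \<le> w tW"
    using continuous_attains_sup[OF compact_Icc _ wc] b0 by fastforce
  define W where "W = w tW"
  have Wpos: "W > 0" unfolding W_def using wpos'[OF inR[OF tW(1)]] .
  define \<epsilon> where "\<epsilon> = m / b"
  have epos: "\<epsilon> > 0" using mpos b0 by (simp add: \<epsilon>_def)
  define Q where "Q t = Q0 t - \<epsilon> * t" for t
  define Qd where "Qd t = Qd0 t - \<epsilon>" for t
  define lam' where "lam' = L + \<epsilon> / W"
  have Llam: "L < lam'" using epos Wpos by (simp add: lam'_def)
  have Qc: "continuous_on {0..b} Q" unfolding Q_def[abs_def] by (intro continuous_intros Q0c)
  have Qdc: "continuous_on {0..b} Qd" unfolding Qd_def[abs_def] by (intro continuous_intros Qd0c)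
  have Qder: "(Q has_real_derivative Qd t) (at t)" if "0 < t" "t < b" for t
  proof -
    have "((\<lambda>t. Q0 t - \<epsilon> * t) has_real_derivative Qd0 t - \<epsilon> * 1) (at t)"
      by (intro DERIV_diff Q0der DERIV_cmult DERIV_ident) (use that bR in auto)
    thus ?thesis unfolding Q_def[abs_def] Qd_def by simp
  qed
  have QleQ0: "Q t \<le> Q0 t" if "t \<in> {0..b}" for t using that epos by (simp add: Q_def)
  have Qnn: "Q t \<ge> 0" if t: "t \<in> {0..b}" for t
  proof -
    have "\<epsilon> * t \<le> \<epsilon> * b" using t epos by (simp add: mult_left_mono)
    also have "\<dots> = m" using b0 by (simp add: \<epsilon>_def)
    also have "m \<le> Q0 t" using tm(2) t by (simp add: m_def)
    finally show ?thesis by (simp add: Q_def)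
  qed
  have pw: "p * Q t * spow p vv * gg + Qd t * \<bar>vv\<bar> powr p
               \<le> \<bar>gg\<bar> powr p * w t - lam' * (\<bar>vv\<bar> powr p * w t)" if t: "t \<in> {0..b}" for t vv gg
  proof -
    have tR: "t \<in> {0..R}" by (rule inR[OF t])
    have dup: "du t > 0" using pos_case(2)[OF ap] inR'[OF t] by blast
    have up: "u t > 0" using upos'[OF tR] .
    have wt: "w t > 0" using wpos'[OF tR] .
    define r where "r = du t / u t"
    have rp: "r > 0" using dup up by (simp add: r_def)
    have zr: "z t = r powr (p - 1)" unfolding z_def r_def using dup up
      by (simp add: spow_pos powr_divide powr_minus_divide[of "u t" "p - 1", simplified] powr_mult inverse_powr divide_inverse)
    have Hr: "H t = r powr p"
    proof -
      have "H t = (r powr (p - 1)) powr qq" using zr rp by (simp add: H_def)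
      also have "\<dots> = r powr ((p - 1) * qq)" by (simp add: powr_powr)
      also have "(p - 1) * qq = p" using p1 by (simp add: qq_def)
      finally show ?thesis .
    qed
    define X where "X = \<bar>vv\<bar> powr p"
    define Y where "Y = \<bar>gg\<bar> powr p"
    have Xnn: "X \<ge> 0" by (simp add: X_def)
    have sg: "spow p vv * gg \<le> \<bar>vv\<bar> powr (p - 1) * \<bar>gg\<bar>"
    proof -
      have "spow p vv * gg \<le> \<bar>spow p vv * gg\<bar>" by simp
      also have "\<dots> = \<bar>vv\<bar> powr (p - 1) * \<bar>gg\<bar>" by (simp add: spow_def abs_mult sgn_if)
      finally show ?thesis .
    qed
    have K: "0 \<le> \<bar>vv\<bar> powr (p - 1) * \<bar>gg\<bar>" by simp
    have i0: "p * Q t * spow p vv * gg \<le> p * Q0 t * (\<bar>vv\<bar> powr (p - 1) * \<bar>gg\<bar>)"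
    proof -
      have "p * Q t * (spow p vv * gg) \<le> p * Q t * (\<bar>vv\<bar> powr (p - 1) * \<bar>gg\<bar>)"
        using sg Qnn[OF t] p1 by (intro mult_left_mono) auto
      also have "\<dots> \<le> p * Q0 t * (\<bar>vv\<bar> powr (p - 1) * \<bar>gg\<bar>)"
        using QleQ0[OF t] p1 K by (intro mult_right_mono mult_left_mono) auto
      finally show ?thesis by (simp add: mult.assoc)
    qed
    have yt: "p * (r * \<bar>vv\<bar>) powr (p - 1) * \<bar>gg\<bar> \<le> \<bar>gg\<bar> powr p + (p - 1) * (r * \<bar>vv\<bar>) powr p"
      by (rule young_tangent[OF p1]) (use rp in auto)
    have e1: "(r * \<bar>vv\<bar>) powr (p - 1) = r powr (p - 1) * \<bar>vv\<bar> powr (p - 1)" by (rule powr_mult)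
    have e2: "(r * \<bar>vv\<bar>) powr p = H t * X" unfolding Hr X_def by (rule powr_mult)
    have "p * Q0 t * (\<bar>vv\<bar> powr (p - 1) * \<bar>gg\<bar>) = w t * (p * (r * \<bar>vv\<bar>) powr (p - 1) * \<bar>gg\<bar>)"
      unfolding Q0_def zr e1 by (simp add: algebra_simps)
    also have "\<dots> \<le> w t * (Y + (p - 1) * (H t * X))"
      using yt e2 wt unfolding Y_def by (intro mult_left_mono) auto
    finally have i1: "p * Q t * spow p vv * gg \<le> w t * Y + (p - 1) * (w t * H t * X)"
      using i0 by (simp add: algebra_simps)
    have e3: "Qd t * X = - (L * (w t * X)) - (p - 1) * (w t * H t * X) - \<epsilon> * X"
      unfolding Qd_def Qd0_def by (simp add: algebra_simps)
    have e4: "lam' * (X * w t) = L * (w t * X) + \<epsilon> / W * w t * X"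
      unfolding lam'_def by (simp add: algebra_simps)
    have i3: "\<epsilon> / W * w t * X \<le> \<epsilon> * X"
    proof -
      have "w t \<le> W" using tW(2) t by (simp add: W_def)
      hence "\<epsilon> / W * w t \<le> \<epsilon> / W * W" using epos Wpos by (intro mult_left_mono) auto
      also have "\<dots> = \<epsilon>" using Wpos by simp
      finally show ?thesis using Xnn by (rule mult_right_mono)
    qed
    have e5: "Y * w t = w t * Y" by simp
    show ?thesis unfolding X_def[symmetric] Y_def[symmetric] using i1 e3 e4 i3 e5 by linarith
  qed
  have Q0eq: "Q 0 = \<alpha>" unfolding Q_def Q0_def using w0 z0 by simp
  have lower: "lam' \<le> x" if x: "x \<in> {(LBINT t:{0..Rb}. \<bar>g t\<bar> powr p * w t) + \<alpha> * \<bar>v 0\<bar> powr p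
      | v g. W1p_pair p Rb v g \<and> (LBINT t:{0..Rb}. \<bar>v t\<bar> powr p * w t) = 1}" for x
  proof -
    obtain v g where xe: "x = (LBINT t:{0..b}. \<bar>g t\<bar> powr p * w t) + \<alpha> * \<bar>v 0\<bar> powr p"
      and W1: "W1p_pair p b v g" and norm1: "(LBINT t:{0..b}. \<bar>v t\<bar> powr p * w t) = 1"
    proof -
      have "\<exists>v g. x = (LBINT t:{0..b}. \<bar>g t\<bar> powr p * w t) + \<alpha> * \<bar>v 0\<bar> powr p
        \<and> W1p_pair p b v g \<and> (LBINT t:{0..b}. \<bar>v t\<bar> powr p * w t) = 1"
        using x unfolding b_def by simp
      thus ?thesis using that by blast
    qed
    have gI: "set_integrable lborel {0..b} g" and gpI: "set_integrable lborel {0..b} (\<lambda>t. \<bar>g t\<bar> powr p)"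
      and vrepL: "\<forall>x\<in>{0..b}. v x = v 0 + (LBINT t:{0..x}. g t)"
      using W1 unfolding W1p_pair_def by blast+
    have gi: "g absolutely_integrable_on {0..b}" by (rule lborel_abs[OF gI])
    have gpi: "(\<lambda>t. \<bar>g t\<bar> powr p) integrable_on {0..b}" by (rule lborel_to_hk(1)[OF gpI])
    have vrep: "v x = v 0 + integral {0..x} g" if xx: "x \<in> {0..b}" for x
    proof -
      have si: "set_integrable lborel {0..x} g" by (rule set_integrable_subset[OF gI]) (use xx in auto)
      have "v x = v 0 + (LBINT t:{0..x}. g t)" using vrepL xx by blast
      also have "(LBINT t:{0..x}. g t) = integral {0..x} g" by (rule lborel_to_hk(2)[OF si])
      finally show ?thesis .
    qed
    have gpwI: "set_integrable lborel {0..b} (\<lambda>t. \<bar>g t\<bar> powr p * w t)"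
      by (rule set_int_mult_cont[OF gpI wc])
    have vpwI: "set_integrable lborel {0..b} (\<lambda>t. \<bar>v t\<bar> powr p * w t)"
    proof (rule ccontr)
      assume "\<not> ?thesis"
      hence "(LBINT t:{0..b}. \<bar>v t\<bar> powr p * w t) = 0"
        unfolding set_integrable_def set_lebesgue_integral_def by (rule not_integrable_integral_eq)
      thus False using norm1 by simp
    qed
    have pic: "Q b * \<bar>v b\<bar> powr p - Q 0 * \<bar>v 0\<bar> powr p
     \<le> integral {0..b} (\<lambda>t. \<bar>g t\<bar> powr p * w t - lam' * (\<bar>v t\<bar> powr p * w t))"
      by (rule picone_bound[OF p1 b0 wc Qc Qdc Qder Qnn pw gi gpi vrep]) auto
    also have "\<dots> = integral {0..b} (\<lambda>t. \<bar>g t\<bar> powr p * w t) - lam' * integral {0..b} (\<lambda>t. \<bar>v t\<bar> powr p * w t)"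
      by (simp only: integral_diff[OF lborel_to_hk(1)[OF gpwI] integrable_on_mult_right[OF lborel_to_hk(1)[OF vpwI]]]
          integral_mult_right)
    also have "\<dots> = (LBINT t:{0..b}. \<bar>g t\<bar> powr p * w t) - lam'"
      using lborel_to_hk(2)[OF gpwI] lborel_to_hk(2)[OF vpwI] norm1 by simp
    finally have "Q b * \<bar>v b\<bar> powr p - \<alpha> * \<bar>v 0\<bar> powr p \<le> (LBINT t:{0..b}. \<bar>g t\<bar> powr p * w t) - lam'"
      using Q0eq by simp
    moreover have "Q b * \<bar>v b\<bar> powr p \<ge> 0" using Qnn[of b] b0 by simp
    ultimately show ?thesis using xe by linarith
  qed
  have wI: "set_integrable lborel {0..b} w"
    unfolding set_integrable_def by (rule borel_integrable_compact[OF compact_Icc wc])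
  define Iw where "Iw = integral {0..b} w"
  have Iwpos: "Iw > 0"
  proof -
    obtain tn where tn: "tn \<in> {0..b}" "\<forall>y\<in>{0..b}. w tn \<le> w y"
      using continuous_attains_inf[OF compact_Icc _ wc] b0 by fastforce
    have wm: "w tn > 0" using wpos'[OF inR[OF tn(1)]] .
    have "integral {0..b} (\<lambda>t. w tn) \<le> Iw" unfolding Iw_def
      by (rule integral_le) (use tn lborel_to_hk(1)[OF wI] in auto)
    moreover have "integral {0..b} (\<lambda>t. w tn) = b * w tn" using b0 by (simp add: content_real)
    ultimately show ?thesis using wm b0 by (smt (verit) mult_pos_pos)
  qed
  define c where "c = Iw powr (- 1 / p)"
  have cp: "\<bar>c\<bar> powr p = 1 / Iw"
  proof -
    have "\<bar>c\<bar> = c" by (simp add: c_def)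
    hence "\<bar>c\<bar> powr p = Iw powr ((- 1 / p) * p)" by (simp add: c_def powr_powr)
    also have "(- 1 / p) * p = - 1" using p1 by simp
    finally show ?thesis using Iwpos by (simp add: powr_minus_divide)
  qed
  have mem: "(LBINT t:{0..Rb}. \<bar>(\<lambda>t. 0::real) t\<bar> powr p * w t) + \<alpha> * \<bar>(\<lambda>t. c) 0\<bar> powr p
      \<in> {(LBINT t:{0..Rb}. \<bar>g t\<bar> powr p * w t) + \<alpha> * \<bar>v 0\<bar> powr p
      | v g. W1p_pair p Rb v g \<and> (LBINT t:{0..Rb}. \<bar>v t\<bar> powr p * w t) = 1}"
  proof -
    have cI: "set_integrable lborel {0..b} (\<lambda>t. k)" for k :: real
      unfolding set_integrable_def by (rule borel_integrable_compact[OF compact_Icc continuous_on_const])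
    have "W1p_pair p b (\<lambda>t. c) (\<lambda>t. 0)"
      unfolding W1p_pair_def using cI by (simp add: set_lebesgue_integral_def)
    moreover have "(LBINT t:{0..b}. \<bar>c\<bar> powr p * w t) = 1"
      using lborel_to_hk(2)[OF wI] cp Iwpos by (simp add: Iw_def)
    ultimately show ?thesis unfolding b_def
      by (intro CollectI exI[where x="\<lambda>t. c"] exI[where x="\<lambda>t::real. 0::real"]) simp
  qed
  have "lam' \<le> lam_bar p Rb w \<alpha>"
    unfolding lam_bar_def by (rule cInf_greatest) (use mem lower in blast)+
  thus ?thesis using Llam by simp
qed

end

theorem proposition2p1:
  fixes p R \<alpha> :: real and w u du :: "real \<Rightarrow> real"
  assumes "1 < p" and "0 < R" and "\<alpha> \<noteq> 0"
    and "smooth_on_interval R w" and "\<forall>t\<in>{0..R}. w t > 0" and "w 0 = 1"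
    and "is_eigenfunction p R w \<alpha> (lam_bar p R w \<alpha>) u du"
    and "\<forall>t\<in>{0..R}. u t > 0"
  shows "(\<alpha> > 0 \<longrightarrow> (\<forall>t\<in>{0..<R}. du t > 0))
    \<and> (\<alpha> < 0 \<longrightarrow> (\<forall>t\<in>{0..<R}. du t < 0))
    \<and> (\<forall>Rb. \<alpha> > 0 \<and> 0 < Rb \<and> Rb < R \<longrightarrow> lam_bar p R w \<alpha> < lam_bar p Rb w \<alpha>)
    \<and> ((\<forall>t\<in>{0..<R}. deriv (deriv (\<lambda>s. ln (w s))) t < 0) \<longrightarrow>
        (\<alpha> > 0 \<longrightarrow> (\<forall>s\<in>{0..R}. \<forall>t\<in>{0..R}. s \<le> t \<longrightarrow> du t / u t \<le> du s / u s)
                     \<and> (\<forall>t\<in>{0..R}. \<bar>du t / u t\<bar> powr (p - 1) \<le> \<alpha>))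
      \<and> (\<alpha> < 0 \<longrightarrow> (\<forall>s\<in>{0..R}. \<forall>t\<in>{0..R}. s \<le> t \<longrightarrow> du s / u s \<le> du t / u t)
                     \<and> (\<forall>t\<in>{0..R}. \<bar>du t / u t\<bar> powr (p - 1) \<le> - \<alpha>)))"
proof -
  interpret eig p R \<alpha> w u du using assms by unfold_locales
  show ?thesis
  proof (intro conjI impI allI)
    assume "\<alpha> > 0" thus "\<forall>t\<in>{0..<R}. du t > 0" by (rule pos_case(2))
  next
    assume "\<alpha> < 0" thus "\<forall>t\<in>{0..<R}. du t < 0" by (rule neg_case(2))
  next
    fix Rb assume "\<alpha> > 0 \<and> 0 < Rb \<and> Rb < R"
    thus "lam_bar p R w \<alpha> < lam_bar p Rb w \<alpha>" using part3 by blast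
  next
    assume "\<forall>t\<in>{0..<R}. deriv (deriv (\<lambda>s. ln (w s))) t < 0" "\<alpha> > 0"
    thus "\<forall>s\<in>{0..R}. \<forall>t\<in>{0..R}. s \<le> t \<longrightarrow> du t / u t \<le> du s / u s"
         "\<forall>t\<in>{0..R}. \<bar>du t / u t\<bar> powr (p - 1) \<le> \<alpha>" using part4 by blast+
  next
    assume "\<forall>t\<in>{0..<R}. deriv (deriv (\<lambda>s. ln (w s))) t < 0" "\<alpha> < 0"
    thus "\<forall>s\<in>{0..R}. \<forall>t\<in>{0..R}. s \<le> t \<longrightarrow> du s / u s \<le> du t / u t"
         "\<forall>t\<in>{0..R}. \<bar>du t / u t\<bar> powr (p - 1) \<le> - \<alpha>" using part5 by blast+
  qed
qed

end
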